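(* Let $L$ be an $n\times n$ complex matrix with at most one nonzero entry in each row and in each column (a generalized permutation matrix in the relaxed sense, allowing zero rows and columns). Let $n_z = n - \mathrm{rank}(L)$ be the number of zero columns (equivalently, zero rows) of $L$. Consider decompositions $L = AD$ with $A$ an $n\times n$ permutation matrix and $D$ an $n\times n$ diagonal matrix. Then $D$ is always uniquely determined by $L$, and the decomposition $L=AD$ is unique if and only if $n_z \le 1$; otherwise there are $n_z!$ ways to choose $A$. However, if one imposes the rule that, for every cycle of the permutation $\sigma$ associated with $A$ (with domain $N_\gamma$), the set $\{j \in N_\gamma : D_j = 0\}$ has at most one element, then the choice of $A$ is unique; and it is always possible to choose $A$ so that this rule holds.
   Context: For a permutation matrix $A$, the associated permutation $\sigma\in S_n$ is defined by $A e_j = e_{\sigma(j)}$, so that $(AD)e_j = D_j e_{\sigma(j)}$ where $D_j$ is the $j$-th diagonal entry of $D$. The permutation $\sigma$ decomposes into disjoint cycles; $N_\gamma\subseteq\{1,\dots,n\}$ denotes the domain of the $\gamma$-th cycle, and these domains partition $\{1,\dots,n\}$. *)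

theory Defs
  imports "HOL-Analysis.Analysis"
begin

definition perm_mat_of :: "('n::finite \<Rightarrow> 'n) \<Rightarrow> complex^'n^'n" where
  "perm_mat_of \<sigma> = (\<chi> i j. if i = \<sigma> j then 1 else 0)"

definition is_perm_matrix :: "complex^'n^'n::finite \<Rightarrow> bool" where
  "is_perm_matrix A \<longleftrightarrow> (\<exists>\<sigma>. \<sigma> permutes (UNIV::'n set) \<and> A = perm_mat_of \<sigma>)"

definition is_diag_matrix :: "complex^'n^'n::finite \<Rightarrow> bool" where
  "is_diag_matrix D \<longleftrightarrow> (\<forall>i j. i \<noteq> j \<longrightarrow> D $ i $ j = 0)"

definition relaxed_gen_perm :: "complex^'n^'n::finite \<Rightarrow> bool" where
  "relaxed_gen_perm L \<longleftrightarrow>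
     (\<forall>i j k. L $ i $ j \<noteq> 0 \<and> L $ i $ k \<noteq> 0 \<longrightarrow> j = k) \<and>
     (\<forall>i j k. L $ i $ j \<noteq> 0 \<and> L $ k $ j \<noteq> 0 \<longrightarrow> i = k)"

definition is_AD_decomp :: "complex^'n^'n::finite \<Rightarrow> complex^'n^'n \<Rightarrow> complex^'n^'n \<Rightarrow> bool" where
  "is_AD_decomp L A D \<longleftrightarrow> is_perm_matrix A \<and> is_diag_matrix D \<and> L = A ** D"

definition cycle_dom :: "('n \<Rightarrow> 'n) \<Rightarrow> 'n \<Rightarrow> 'n set" where
  "cycle_dom \<sigma> j = {(\<sigma> ^^ k) j | k. True}"

definition cycle_rule :: "complex^'n^'n::finite \<Rightarrow> complex^'n^'n \<Rightarrow> bool" where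
  "cycle_rule A D \<longleftrightarrow> (\<forall>\<sigma>. \<sigma> permutes (UNIV::'n set) \<and> A = perm_mat_of \<sigma> \<longrightarrow>
      (\<forall>j. card {i \<in> cycle_dom \<sigma> j. D $ i $ i = 0} \<le> 1))"

end

theory Submission
  imports Defs "HOL-Combinatorics.Cycles"
begin

definition chain :: "('a \<Rightarrow> 'a) \<Rightarrow> 'a set \<Rightarrow> 'a \<Rightarrow> 'a \<Rightarrow> nat \<Rightarrow> bool" where
  "chain \<sigma> J s z n \<longleftrightarrow> (\<sigma> ^^ n) s = z \<and> (\<forall>k<n. (\<sigma> ^^ k) s \<in> J)"

lemma chain_agree:
  assumes agree: "\<And>x. x \<in> J \<Longrightarrow> \<tau> x = \<sigma> x" and c: "chain \<sigma> J s z n"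
  shows "chain \<tau> J s z n"
proof -
  have "\<forall>k\<le>n. (\<tau> ^^ k) s = (\<sigma> ^^ k) s"
  proof (intro allI impI)
    fix k assume "k \<le> n" then show "(\<tau> ^^ k) s = (\<sigma> ^^ k) s"
    proof (induction k)
      case 0 then show ?case by simp
    next
      case (Suc k)
      then have "(\<sigma> ^^ k) s \<in> J" using c unfolding chain_def by auto
      then show ?case using Suc agree by simp
    qed
  qed
  then show ?thesis using c unfolding chain_def by auto
qed

lemma chain_unique_aux:
  assumes "inj \<sigma>" "chain \<sigma> J s z n" "chain \<sigma> J t z m" "s \<notin> \<sigma> ` J" "n \<le> m"
  shows "s = t"
proof -
  have "(\<sigma> ^^ n) ((\<sigma> ^^ (m - n)) t) = (\<sigma> ^^ n) s"
    using assms(2,3,5) unfolding chain_def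
    by (metis funpow_add le_add_diff_inverse o_apply)
  then have e: "(\<sigma> ^^ (m - n)) t = s" using inj_fn[OF assms(1), of n] by (simp add: inj_eq)
  show ?thesis
  proof (cases "m - n")
    case 0 then show ?thesis using e by simp
  next
    case (Suc q)
    then have "(\<sigma> ^^ q) t \<in> J" using assms(3) unfolding chain_def by auto
    moreover have "s = \<sigma> ((\<sigma> ^^ q) t)" using e Suc by simp
    ultimately show ?thesis using assms(4) by auto
  qed
qed

lemma chain_unique:
  assumes "inj \<sigma>" "chain \<sigma> J s z n" "chain \<sigma> J t z m" "s \<notin> \<sigma> ` J" "t \<notin> \<sigma> ` J"
  shows "s = t"
  using chain_unique_aux[OF assms(1,2,3,4)] chain_unique_aux[OF assms(1,3,2,5)] by (metis nat_le_linear)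

lemma rule_chain:
  fixes \<sigma> :: "'n::finite \<Rightarrow> 'n"
  assumes p: "\<sigma> permutes UNIV" and z: "z \<notin> J"
    and rule: "\<And>j. card {i \<in> cycle_dom \<sigma> j. i \<notin> J} \<le> 1"
  shows "\<exists>n. chain \<sigma> J (\<sigma> z) z n"
proof -
  have "permutation \<sigma>" using p unfolding permutation_permutes by (metis finite)
  then obtain N where N: "\<sigma> ^^ N = id" "N > 0" by (rule permutation_is_nilpotent)
  define P where "P = (LEAST p. p > 0 \<and> (\<sigma> ^^ p) z = z)"
  have ex: "N > 0 \<and> (\<sigma> ^^ N) z = z" using N by simp
  have P1: "P > 0 \<and> (\<sigma> ^^ P) z = z" unfolding P_def by (rule LeastI[of _ N], rule ex)
  have P2: "\<And>q. 0 < q \<Longrightarrow> q < P \<Longrightarrow> (\<sigma> ^^ q) z \<noteq> z"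
    unfolding P_def using not_less_Least by blast
  have "chain \<sigma> J (\<sigma> z) z (P - 1)"
    unfolding chain_def
  proof (intro conjI allI impI)
    show "(\<sigma> ^^ (P - 1)) (\<sigma> z) = z" using P1
      by (metis Suc_diff_1 funpow_Suc_right o_apply)
  next
    fix k assume k: "k < P - 1"
    have eq: "(\<sigma> ^^ k) (\<sigma> z) = (\<sigma> ^^ Suc k) z" by (simp add: funpow_swap1)
    have ne: "(\<sigma> ^^ Suc k) z \<noteq> z" using P2[of "Suc k"] k by simp
    show "(\<sigma> ^^ k) (\<sigma> z) \<in> J"
    proof (rule ccontr)
      assume "(\<sigma> ^^ k) (\<sigma> z) \<notin> J"
      then have "{z, (\<sigma> ^^ Suc k) z} \<subseteq> {i \<in> cycle_dom \<sigma> z. i \<notin> J}"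
        using z eq unfolding cycle_dom_def by (auto intro: exI[of _ 0] exI[of _ "Suc k"])
      then have "card {z, (\<sigma> ^^ Suc k) z} \<le> card {i \<in> cycle_dom \<sigma> z. i \<notin> J}"
        by (intro card_mono) auto
      then show False using rule[of z] ne by simp
    qed
  qed
  then show ?thesis by blast
qed

lemma construct:
  fixes \<sigma>0 :: "'n::finite \<Rightarrow> 'n"
  assumes p0: "\<sigma>0 permutes UNIV"
  shows "\<exists>\<sigma>. \<sigma> permutes UNIV \<and> (\<forall>j\<in>J. \<sigma> j = \<sigma>0 j) \<and>
           (\<forall>j. card {i \<in> cycle_dom \<sigma> j. i \<notin> J} \<le> 1)"
proof -
  define \<tau> where "\<tau> = inv \<sigma>0"
  have pt: "\<tau> permutes UNIV" unfolding \<tau>_def using p0 by (rule permutes_inv)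
  have inv1: "\<And>x. \<sigma>0 (\<tau> x) = x" and inv2: "\<And>x. \<tau> (\<sigma>0 x) = x"
    unfolding \<tau>_def using permutes_inverses[OF p0] by auto
  have startex: "\<exists>s k. chain \<sigma>0 J s z k \<and> s \<notin> \<sigma>0 ` J" if z: "z \<notin> J" for z
  proof -
    have "permutation \<tau>" using pt unfolding permutation_permutes by (metis finite)
    then obtain N where N: "\<tau> ^^ N = id" "N > 0" by (rule permutation_is_nilpotent)
    have ex: "\<exists>k. (\<tau> ^^ k) z \<notin> \<sigma>0 ` J"
    proof (rule ccontr)
      assume "\<not> ?thesis"
      then have "(\<tau> ^^ (N - 1)) z \<in> \<sigma>0 ` J" by blast
      then have "\<tau> ((\<tau> ^^ (N - 1)) z) \<in> J" using inv2 by auto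
      moreover have "\<tau> ((\<tau> ^^ (N - 1)) z) = (\<tau> ^^ N) z"
      proof -
        have "N = Suc (N - 1)" using N(2) by simp
        then show ?thesis by (metis comp_apply funpow.simps(2))
      qed
      ultimately show False using N z by simp
    qed
    define k where "k = (LEAST k. (\<tau> ^^ k) z \<notin> \<sigma>0 ` J)"
    have k1: "(\<tau> ^^ k) z \<notin> \<sigma>0 ` J" unfolding k_def using ex by (rule LeastI_ex)
    have k2: "\<And>q. q < k \<Longrightarrow> (\<tau> ^^ q) z \<in> \<sigma>0 ` J" unfolding k_def using not_less_Least by blast
    define s where "s = (\<tau> ^^ k) z"
    have it: "(\<sigma>0 ^^ j) s = (\<tau> ^^ (k - j)) z" if "j \<le> k" for j
      using that
    proof (induction j)
      case 0 then show ?case by (simp add: s_def)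
    next
      case (Suc j)
      have kj: "k - j = Suc (k - Suc j)" using Suc.prems by simp
      have "(\<tau> ^^ (k - j)) z = \<tau> ((\<tau> ^^ (k - Suc j)) z)" unfolding kj by simp
      then show ?case using Suc by (simp add: inv1)
    qed
    have "chain \<sigma>0 J s z k"
      unfolding chain_def
    proof (intro conjI allI impI)
      show "(\<sigma>0 ^^ k) s = z" using it[of k] by simp
    next
      fix j assume j: "j < k"
      have "(\<tau> ^^ (k - Suc j)) z \<in> \<sigma>0 ` J" using k2 j by simp
      then have "\<tau> ((\<tau> ^^ (k - Suc j)) z) \<in> J" using inv2 by auto
      moreover have "\<tau> ((\<tau> ^^ (k - Suc j)) z) = (\<tau> ^^ (k - j)) z"
      proof -
        have kj: "k - j = Suc (k - Suc j)" using j by simp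
        show ?thesis unfolding kj by simp
      qed
      ultimately show "(\<sigma>0 ^^ j) s \<in> J" using it[of j] j by simp
    qed
    then show ?thesis using k1 s_def by blast
  qed
  then have chx: "\<forall>z. \<exists>p. z \<notin> J \<longrightarrow> chain \<sigma>0 J (fst p) z (snd p) \<and> fst p \<notin> \<sigma>0 ` J"
    by auto
  obtain f where f: "\<forall>z. z \<notin> J \<longrightarrow> chain \<sigma>0 J (fst (f z)) z (snd (f z)) \<and> fst (f z) \<notin> \<sigma>0 ` J"
    using choice[OF chx] by blast
  define st where "st z = fst (f z)" for z
  define kk where "kk z = snd (f z)" for z
  have stk: "\<And>z. z \<notin> J \<Longrightarrow> chain \<sigma>0 J (st z) z (kk z) \<and> st z \<notin> \<sigma>0 ` J"
    using f unfolding st_def kk_def by blast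
  define \<sigma> where "\<sigma> x = (if x \<in> J then \<sigma>0 x else st x)" for x
  have inj0: "inj \<sigma>0" using p0 by (rule permutes_inj)
  have "inj \<sigma>"
  proof (rule injI)
    fix x y assume e: "\<sigma> x = \<sigma> y"
    show "x = y"
    proof (cases "x \<in> J"; cases "y \<in> J")
      assume "x \<in> J" "y \<in> J" then show ?thesis using e inj0 by (simp add: \<sigma>_def inj_eq)
    next
      assume "x \<in> J" "y \<notin> J" then show ?thesis using e stk[of y] unfolding \<sigma>_def by (metis imageI)
    next
      assume "x \<notin> J" "y \<in> J" then show ?thesis using e stk[of x] unfolding \<sigma>_def by (metis imageI)
    next
      assume xy: "x \<notin> J" "y \<notin> J"
      then have ee: "st x = st y" using e by (simp add: \<sigma>_def)
      have cx: "chain \<sigma>0 J (st x) x (kk x)" and cy: "chain \<sigma>0 J (st x) y (kk y)"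
        using stk[of x] stk[of y] xy ee by auto
      show ?thesis
      proof (cases rule: linorder_cases[of "kk x" "kk y"])
        case less
        then have "(\<sigma>0 ^^ kk x) (st x) \<in> J" using cy unfolding chain_def by blast
        then show ?thesis using cx xy unfolding chain_def by simp
      next
        case greater
        then have "(\<sigma>0 ^^ kk y) (st x) \<in> J" using cx unfolding chain_def by blast
        then show ?thesis using cy xy unfolding chain_def by simp
      next
        case equal
        then show ?thesis using cx cy unfolding chain_def by metis
      qed
    qed
  qed
  then have "bij \<sigma>" using finite_UNIV_inj_surj[of \<sigma>] by (simp add: bij_def)
  then have ps: "\<sigma> permutes UNIV" by (intro bij_imp_permutes) auto
  have agree: "\<forall>j\<in>J. \<sigma> j = \<sigma>0 j" by (simp add: \<sigma>_def)
  have "card {i \<in> cycle_dom \<sigma> j. i \<notin> J} \<le> 1" for j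
  proof -
    have "permutation \<sigma>" using ps unfolding permutation_permutes by (metis finite)
    then obtain N where N: "\<sigma> ^^ N = id" "N > 0" by (rule permutation_is_nilpotent)
    have "i = z" if zT: "z \<in> {i \<in> cycle_dom \<sigma> j. i \<notin> J}" and iT: "i \<in> {i \<in> cycle_dom \<sigma> j. i \<notin> J}" for i z
    proof -
      obtain a where a: "z = (\<sigma> ^^ a) j" "z \<notin> J" using zT unfolding cycle_dom_def by auto
      obtain b where b: "i = (\<sigma> ^^ b) j" "i \<notin> J" using iT unfolding cycle_dom_def by auto
      have cz: "chain \<sigma> J (st z) z (kk z)"
        using chain_agree[of J \<sigma> \<sigma>0] stk[of z] a agree by auto
      have sz: "\<sigma> z = st z" using a by (simp add: \<sigma>_def)
      define P where "P = Suc (kk z)"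
      have Pz: "(\<sigma> ^^ P) z = z" using cz sz unfolding chain_def P_def
        by (simp add: funpow_swap1)
      define c where "c = b + (N - 1) * a"
      have NA: "\<sigma> ^^ (N * a) = id" by (metis N(1) id_funpow funpow_mult)
      have "c + a = b + N * a" unfolding c_def using N(2)
        by (cases N) auto
      note eqca = this
      have "(\<sigma> ^^ c) z = (\<sigma> ^^ (c + a)) j" using a by (simp add: funpow_add)
      also have "\<dots> = (\<sigma> ^^ (b + N * a)) j" using eqca by simp
      also have "\<dots> = (\<sigma> ^^ b) ((\<sigma> ^^ (N * a)) j)" by (simp add: funpow_add)
      finally have "(\<sigma> ^^ c) z = (\<sigma> ^^ b) ((\<sigma> ^^ (N * a)) j)" .
      then have ic: "i = (\<sigma> ^^ c) z" using NA b by simp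
      then have ic2: "i = (\<sigma> ^^ (c mod P)) z" by (simp add: funpow_mod_eq[OF Pz])
      show "i = z"
      proof (cases "c mod P")
        case 0 then show ?thesis using ic2 by simp
      next
        case (Suc q)
        have "q < kk z" using Suc mod_less_divisor[of P c] P_def by simp
        then have "(\<sigma> ^^ q) (st z) \<in> J" using cz unfolding chain_def by auto
        moreover have "i = (\<sigma> ^^ q) (st z)" using ic2 Suc sz by (simp add: funpow_swap1)
        ultimately show ?thesis using b by simp
      qed
    qed
    note uniq = this
    have fin: "finite {i \<in> cycle_dom \<sigma> j. i \<notin> J}" by simp
    show ?thesis unfolding One_nat_def card_le_Suc0_iff_eq[OF fin] using uniq by blast
  qed
  then show ?thesis using ps agree by blast
qed

lemma count_perms:
  fixes \<sigma>0 :: "'n::finite \<Rightarrow> 'n"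
  assumes p0: "\<sigma>0 permutes UNIV"
  shows "card {\<sigma>. \<sigma> permutes UNIV \<and> (\<forall>j\<in>J. \<sigma> j = \<sigma>0 j)} = fact (card (- J))"
proof -
  have inj0: "inj \<sigma>0" using p0 by (rule permutes_inj)
  have eq: "{\<sigma>. \<sigma> permutes UNIV \<and> (\<forall>j\<in>J. \<sigma> j = \<sigma>0 j)} = (\<lambda>\<pi>. \<sigma>0 \<circ> \<pi>) ` {\<pi>. \<pi> permutes (- J)}"
  proof (intro equalityI subsetI)
    fix \<sigma> assume "\<sigma> \<in> {\<sigma>. \<sigma> permutes UNIV \<and> (\<forall>j\<in>J. \<sigma> j = \<sigma>0 j)}"
    then have s: "\<sigma> permutes UNIV" "\<forall>j\<in>J. \<sigma> j = \<sigma>0 j" by auto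
    define \<pi> where "\<pi> = inv \<sigma>0 \<circ> \<sigma>"
    have pu: "\<pi> permutes UNIV" unfolding \<pi>_def by (intro permutes_compose permutes_inv s p0)
    have fx: "\<pi> x = x" if "x \<in> UNIV - (- J)" for x
    proof -
      have "\<sigma> x = \<sigma>0 x" using s(2) that by simp
      then show "\<pi> x = x" unfolding \<pi>_def using permutes_inverses(2)[OF p0] by simp
    qed
    have pj: "\<pi> permutes (- J)" using pu fx by (rule permutes_superset)
    have se: "\<sigma> = \<sigma>0 \<circ> \<pi>" unfolding \<pi>_def using permutes_inverses[OF p0] by (simp add: fun_eq_iff)
    show "\<sigma> \<in> (\<lambda>\<pi>. \<sigma>0 \<circ> \<pi>) ` {\<pi>. \<pi> permutes (- J)}"
      unfolding se by (rule imageI) (simp add: pj)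
  next
    fix \<sigma> assume "\<sigma> \<in> (\<lambda>\<pi>. \<sigma>0 \<circ> \<pi>) ` {\<pi>. \<pi> permutes (- J)}"
    then obtain \<pi> where pi1: "\<pi> \<in> {\<pi>. \<pi> permutes (- J)}" and pi2: "\<sigma> = \<sigma>0 \<circ> \<pi>" by (rule imageE)
    have pi: "\<pi> permutes (- J)" using pi1 by simp
    have "\<pi> permutes UNIV" using pi by (rule permutes_subset) simp
    then have c1: "\<sigma> permutes UNIV" unfolding pi2 using p0 by (rule permutes_compose)
    have c2: "\<forall>j\<in>J. \<sigma> j = \<sigma>0 j" unfolding pi2 using permutes_not_in[OF pi] by simp
    show "\<sigma> \<in> {\<sigma>. \<sigma> permutes UNIV \<and> (\<forall>j\<in>J. \<sigma> j = \<sigma>0 j)}" using c1 c2 by simp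
  qed
  have "inj_on (\<lambda>\<pi>. \<sigma>0 \<circ> \<pi>) {\<pi>. \<pi> permutes (- J)}"
  proof (rule inj_onI)
    fix \<pi>1 \<pi>2 :: "'n \<Rightarrow> 'n" assume e: "\<sigma>0 \<circ> \<pi>1 = \<sigma>0 \<circ> \<pi>2"
    show "\<pi>1 = \<pi>2"
    proof (rule ext)
      fix x have "\<sigma>0 (\<pi>1 x) = \<sigma>0 (\<pi>2 x)" using e by (metis comp_apply)
      then show "\<pi>1 x = \<pi>2 x" using inj0 by (rule injD[rotated])
    qed
  qed
  then show ?thesis unfolding eq by (simp add: card_image card_permutations)
qed


lemma pm_mult:
  assumes "is_diag_matrix D"
  shows "(perm_mat_of \<sigma> ** D) $ i $ j = (if i = \<sigma> j then D $ j $ j else 0)"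
proof -
  have "\<And>k. (if i = \<sigma> k then 1 else 0) * D $ k $ j = (if k = j then (if i = \<sigma> j then D $ j $ j else 0) else 0)"
    using assms unfolding is_diag_matrix_def by auto
  then show ?thesis unfolding matrix_matrix_mult_def perm_mat_of_def by simp
qed

lemma pm_inj:
  assumes "perm_mat_of \<sigma> = perm_mat_of \<tau>"
  shows "\<sigma> = \<tau>"
proof (rule ext)
  fix j
  have "perm_mat_of \<sigma> $ (\<sigma> j) $ j = 1" by (simp add: perm_mat_of_def)
  then have "perm_mat_of \<tau> $ (\<sigma> j) $ j = 1" using assms by simp
  then show "\<sigma> j = \<tau> j" by (simp add: perm_mat_of_def split: if_splits)
qed

lemma extend_perm:
  fixes r :: "'n::finite \<Rightarrow> 'n"
  assumes "inj_on r J"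
  shows "\<exists>\<sigma>. \<sigma> permutes UNIV \<and> (\<forall>j\<in>J. \<sigma> j = r j)"
proof -
  have "card (- J) = card (- (r ` J))"
    using assms by (simp add: Compl_eq_Diff_UNIV card_Diff_subset card_image)
  moreover have "finite (- J)" "finite (- (r ` J))" by simp_all
  ultimately obtain h where h: "bij_betw h (- J) (- (r ` J))"
    using finite_same_card_bij by metis
  define \<sigma> where "\<sigma> x = (if x \<in> J then r x else h x)" for x
  have "inj \<sigma>"
  proof (rule injI)
    fix x y assume e: "\<sigma> x = \<sigma> y"
    show "x = y"
    proof (cases "x \<in> J"; cases "y \<in> J")
      assume "x \<in> J" "y \<in> J" then show ?thesis using e assms by (simp add: \<sigma>_def inj_on_def)
    next
      assume a: "x \<in> J" "y \<notin> J"
      then have "h y \<in> - (r ` J)" using h by (auto dest: bij_betwE)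
      then show ?thesis using e a unfolding \<sigma>_def by (metis ComplD imageI)
    next
      assume a: "x \<notin> J" "y \<in> J"
      then have "h x \<in> - (r ` J)" using h by (auto dest: bij_betwE)
      then show ?thesis using e a unfolding \<sigma>_def by (metis ComplD imageI)
    next
      assume a: "x \<notin> J" "y \<notin> J"
      then show ?thesis using e h by (simp add: \<sigma>_def bij_betw_def inj_on_def)
    qed
  qed
  then have "bij \<sigma>" using finite_UNIV_inj_surj[of \<sigma>] by (simp add: bij_def)
  then have "\<sigma> permutes UNIV" by (intro bij_imp_permutes) auto
  then show ?thesis by (auto simp: \<sigma>_def)
qed

lemma rank_card:
  fixes L :: "complex^'n^'n::finite"
  assumes R: "relaxed_gen_perm L"
  defines "J \<equiv> {j. \<exists>i. L $ i $ j \<noteq> 0}"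
  shows "rank L = card J"
proof -
  define B where "B = (\<lambda>j. axis j (1::complex) :: complex^'n) ` J"
  have r1: "L $ i $ j \<noteq> 0 \<Longrightarrow> L $ i $ k \<noteq> 0 \<Longrightarrow> j = k" for i j k
    using R unfolding relaxed_gen_perm_def by blast
  have "rows L \<subseteq> vec.span B"
  proof
    fix v assume "v \<in> rows L"
    then obtain i where v: "v = row i L" unfolding rows_def by auto
    have "v = (\<Sum>j\<in>J. L $ i $ j *s axis j 1)"
    proof (subst vec_eq_iff, intro allI)
      fix k
      have "(\<Sum>j\<in>J. L $ i $ j *s axis j (1::complex)) $ k = (\<Sum>j\<in>J. L $ i $ j * (axis j 1) $ k)"
        by (simp add: sum_component)
      also have "\<dots> = (\<Sum>j\<in>J. if j = k then L $ i $ k else 0)"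
        by (intro sum.cong) (auto simp: axis_def)
      also have "\<dots> = L $ i $ k" using J_def by (auto)
      finally show "v $ k = (\<Sum>j\<in>J. L $ i $ j *s axis j 1) $ k" by (simp add: v row_def)
    qed
    also have "\<dots> \<in> vec.span B"
      by (intro vec.span_sum vec.span_scale vec.span_base) (auto simp: B_def)
    finally show "v \<in> vec.span B" .
  qed
  moreover have "B \<subseteq> vec.span (rows L)"
  proof
    fix v assume "v \<in> B"
    then obtain j where j: "j \<in> J" "v = axis j 1" unfolding B_def by auto
    then obtain i where i: "L $ i $ j \<noteq> 0" unfolding J_def by auto
    have "v = (1 / L $ i $ j) *s row i L"
    proof (subst vec_eq_iff, intro allI)
      fix k
      show "v $ k = ((1 / L $ i $ j) *s row i L) $ k"
        using r1[of i j k] i by (cases "k = j") (auto simp: j row_def axis_def)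
    qed
    also have "\<dots> \<in> vec.span (rows L)"
      by (intro vec.span_scale vec.span_base) (auto simp: rows_def)
    finally show "v \<in> vec.span (rows L)" .
  qed
  ultimately have sp: "vec.span (rows L) = vec.span B" using vec.span_eq by blast
  have ind: "vec.independent B"
    by (rule vec.independent_mono[OF independent_cart_basis]) (auto simp: B_def cart_basis_def)
  have "rank L = vec.dim (rows L)" by (simp add: row_rank_def_gen)
  also have "\<dots> = vec.dim (vec.span (rows L))" by simp
  also have "\<dots> = vec.dim B" using sp by simp
  also have "\<dots> = card B" using ind by (rule vec.dim_eq_card_independent)
  also have "\<dots> = card J" unfolding B_def
    by (rule card_image) (auto simp: inj_on_def axis_eq_axis)
  finally show ?thesis .
qed

theorem mainTheorem1:
  fixes L :: "complex^'n^'n::finite"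
  assumes "relaxed_gen_perm L"
  defines "n_z \<equiv> CARD('n) - rank L"
  shows "(\<forall>A1 D1 A2 D2. is_AD_decomp L A1 D1 \<and> is_AD_decomp L A2 D2 \<longrightarrow> D1 = D2)
    \<and> ((\<forall>A1 D1 A2 D2. is_AD_decomp L A1 D1 \<and> is_AD_decomp L A2 D2 \<longrightarrow> A1 = A2 \<and> D1 = D2)
         \<longleftrightarrow> n_z \<le> 1)
    \<and> (n_z \<ge> 2 \<longrightarrow> card {A. \<exists>D. is_AD_decomp L A D} = fact n_z)
    \<and> (\<forall>A1 D1 A2 D2. is_AD_decomp L A1 D1 \<and> cycle_rule A1 D1 \<and>
          is_AD_decomp L A2 D2 \<and> cycle_rule A2 D2 \<longrightarrow> A1 = A2)
    \<and> (\<exists>A D. is_AD_decomp L A D \<and> cycle_rule A D)"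
proof -
  note R = assms(1)
  define J where "J = {j. \<exists>i. L $ i $ j \<noteq> 0}"
  define r where "r j = (SOME i. L $ i $ j \<noteq> 0)" for j
  define Dc :: "complex^'n^'n" where "Dc = (\<chi> i j. if i = j then L $ (r j) $ j else 0)"
  define S where "S = {\<sigma>. \<sigma> permutes (UNIV::'n set) \<and> (\<forall>j\<in>J. \<sigma> j = r j)}"
  have r1: "L $ i $ j \<noteq> 0 \<Longrightarrow> L $ i $ k \<noteq> 0 \<Longrightarrow> j = k" for i j k
    using R unfolding relaxed_gen_perm_def by blast
  have r2: "L $ i $ j \<noteq> 0 \<Longrightarrow> L $ k $ j \<noteq> 0 \<Longrightarrow> i = k" for i j k
    using R unfolding relaxed_gen_perm_def by blast
  have F1: "L $ i $ j \<noteq> 0 \<Longrightarrow> i = r j" for i j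
  proof -
    assume a: "L $ i $ j \<noteq> 0"
    then have "L $ (r j) $ j \<noteq> 0" unfolding r_def by (rule someI)
    then show ?thesis using r2 a by blast
  qed
  have F2: "j \<in> J \<longleftrightarrow> L $ (r j) $ j \<noteq> 0" for j
    unfolding J_def using F1 by auto
  have F3: "j \<notin> J \<Longrightarrow> L $ i $ j = 0" for i j unfolding J_def by auto
  have injr: "inj_on r J"
  proof (rule inj_onI)
    fix j k assume "j \<in> J" "k \<in> J" "r j = r k"
    then show "j = k" using F2 r1 by metis
  qed
  have Dcd: "is_diag_matrix Dc" unfolding is_diag_matrix_def Dc_def by simp
  have Dcii: "Dc $ i $ i = 0 \<longleftrightarrow> i \<notin> J" for i using F2 by (simp add: Dc_def)
  have decomp_iff: "is_AD_decomp L A D \<longleftrightarrow> (\<exists>\<sigma>\<in>S. A = perm_mat_of \<sigma>) \<and> D = Dc" for A D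
  proof
    assume d: "is_AD_decomp L A D"
    then obtain \<sigma> where s: "\<sigma> permutes UNIV" "A = perm_mat_of \<sigma>" and dd: "is_diag_matrix D"
      and LA: "L = A ** D"
      unfolding is_AD_decomp_def is_perm_matrix_def by blast
    have Lij: "L $ i $ j = (if i = \<sigma> j then D $ j $ j else 0)" for i j
      using pm_mult[OF dd, of \<sigma> i j] LA s by simp
    have agree: "\<forall>j\<in>J. \<sigma> j = r j"
    proof
      fix j assume "j \<in> J"
      then have "L $ (r j) $ j \<noteq> 0" using F2 by simp
      then show "\<sigma> j = r j" using Lij[of "r j" j] by (auto split: if_splits)
    qed
    have "D = Dc"
    proof (subst vec_eq_iff, intro allI, subst vec_eq_iff, intro allI)
      fix i j
      show "D $ i $ j = Dc $ i $ j"
      proof (cases "i = j")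
        case False then show ?thesis using dd by (simp add: is_diag_matrix_def Dc_def)
      next
        case True
        show ?thesis
        proof (cases "j \<in> J")
          case True
          then show ?thesis using Lij[of "\<sigma> j" j] agree \<open>i = j\<close> by (simp add: Dc_def)
        next
          case False
          then show ?thesis using Lij[of "\<sigma> j" j] F3[OF False] \<open>i = j\<close> by (simp add: Dc_def)
        qed
      qed
    qed
    then show "(\<exists>\<sigma>\<in>S. A = perm_mat_of \<sigma>) \<and> D = Dc" using s agree S_def by blast
  next
    assume "(\<exists>\<sigma>\<in>S. A = perm_mat_of \<sigma>) \<and> D = Dc"
    then obtain \<sigma> where s: "\<sigma> permutes UNIV" "\<forall>j\<in>J. \<sigma> j = r j" "A = perm_mat_of \<sigma>" and D: "D = Dc"
      unfolding S_def by blast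
    have "L = A ** D"
    proof (subst vec_eq_iff, intro allI, subst vec_eq_iff, intro allI)
      fix i j
      have e: "(A ** D) $ i $ j = (if i = \<sigma> j then Dc $ j $ j else 0)"
        using pm_mult[OF Dcd, of \<sigma> i j] s D by simp
      show "L $ i $ j = (A ** D) $ i $ j"
      proof (cases "j \<in> J")
        case True
        then show ?thesis unfolding e using s(2) F1[of i j] by (auto simp: Dc_def)
      next
        case False
        then show ?thesis unfolding e using F3[OF False] by (simp add: Dc_def)
      qed
    qed
    then show "is_AD_decomp L A D"
      unfolding is_AD_decomp_def is_perm_matrix_def using s D Dcd by blast
  qed
  obtain \<sigma>0 where s0: "\<sigma>0 permutes UNIV" "\<forall>j\<in>J. \<sigma>0 j = r j"
    using extend_perm[OF injr] by blast
  have S0: "\<sigma>0 \<in> S" using s0 S_def by simp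
  have "S = {\<sigma>. \<sigma> permutes UNIV \<and> (\<forall>j\<in>J. \<sigma> j = \<sigma>0 j)}" unfolding S_def using s0 by auto
  then have cardS: "card S = fact (card (- J))" using count_perms[OF s0(1)] by simp
  have "rank L = card J" unfolding J_def by (rule rank_card[OF R])
  then have nz: "n_z = card (- J)"
    unfolding n_z_def by (simp add: Compl_eq_Diff_UNIV card_Diff_subset)
  have finS: "finite S" by (rule finite_subset[of _ UNIV]) auto
  have Aset: "{A. \<exists>D. is_AD_decomp L A D} = perm_mat_of ` S" using decomp_iff by auto
  have injpm: "inj_on perm_mat_of S" by (auto intro: inj_onI pm_inj)
  have cardA: "card {A. \<exists>D. is_AD_decomp L A D} = fact n_z"
    unfolding Aset nz by (simp add: card_image[OF injpm] cardS)
  have rule_iff: "cycle_rule (perm_mat_of \<sigma>) Dc \<longleftrightarrow> (\<forall>j. card {i \<in> cycle_dom \<sigma> j. i \<notin> J} \<le> 1)"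
    if "\<sigma> permutes UNIV" for \<sigma>
  proof -
    have eqs: "{i \<in> cycle_dom \<tau> j. Dc $ i $ i = 0} = {i \<in> cycle_dom \<tau> j. i \<notin> J}" for j \<tau>
      using Dcii by auto
    show ?thesis
    proof
      assume "cycle_rule (perm_mat_of \<sigma>) Dc"
      then have "\<forall>j. card {i \<in> cycle_dom \<sigma> j. Dc $ i $ i = 0} \<le> 1"
        unfolding cycle_rule_def using that by blast
      then show "\<forall>j. card {i \<in> cycle_dom \<sigma> j. i \<notin> J} \<le> 1" unfolding eqs .
    next
      assume a: "\<forall>j. card {i \<in> cycle_dom \<sigma> j. i \<notin> J} \<le> 1"
      show "cycle_rule (perm_mat_of \<sigma>) Dc"
        unfolding cycle_rule_def
      proof (intro allI impI)
        fix \<tau> j assume "\<tau> permutes UNIV \<and> perm_mat_of \<sigma> = perm_mat_of \<tau>"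
        then have "\<tau> = \<sigma>" using pm_inj by metis
        then show "card {i \<in> cycle_dom \<tau> j. Dc $ i $ i = 0} \<le> 1" unfolding eqs using a by simp
      qed
    qed
  qed
  have P1: "\<forall>A1 D1 A2 D2. is_AD_decomp L A1 D1 \<and> is_AD_decomp L A2 D2 \<longrightarrow> D1 = D2"
    using decomp_iff by auto
  have P2: "(\<forall>A1 D1 A2 D2. is_AD_decomp L A1 D1 \<and> is_AD_decomp L A2 D2 \<longrightarrow> A1 = A2 \<and> D1 = D2)
         \<longleftrightarrow> n_z \<le> 1"
  proof
    assume u: "\<forall>A1 D1 A2 D2. is_AD_decomp L A1 D1 \<and> is_AD_decomp L A2 D2 \<longrightarrow> A1 = A2 \<and> D1 = D2"
    show "n_z \<le> 1"
    proof (rule ccontr)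
      assume "\<not> n_z \<le> 1"
      then have "2 \<le> n_z" by simp
      then have "2 \<le> card S" using cardS nz fact_ge_self[of n_z] by simp
      then have "\<not> card S \<le> Suc 0" by simp
      then obtain \<sigma>1 \<sigma>2 where "\<sigma>1 \<in> S" "\<sigma>2 \<in> S" "\<sigma>1 \<noteq> \<sigma>2"
        unfolding card_le_Suc0_iff_eq[OF finS] by blast
      moreover have "is_AD_decomp L (perm_mat_of \<sigma>1) Dc" "is_AD_decomp L (perm_mat_of \<sigma>2) Dc"
        using decomp_iff calculation by auto
      ultimately show False using u pm_inj by metis
    qed
  next
    assume "n_z \<le> 1"
    then have "fact n_z = (1::nat)" by (cases n_z) auto
    then have "card S \<le> Suc 0" using cardS nz by simp
    then have "\<forall>a\<in>S. \<forall>b\<in>S. a = b" unfolding card_le_Suc0_iff_eq[OF finS] .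
    then show "\<forall>A1 D1 A2 D2. is_AD_decomp L A1 D1 \<and> is_AD_decomp L A2 D2 \<longrightarrow> A1 = A2 \<and> D1 = D2"
      using decomp_iff by metis
  qed
  have P4: "\<forall>A1 D1 A2 D2. is_AD_decomp L A1 D1 \<and> cycle_rule A1 D1 \<and>
          is_AD_decomp L A2 D2 \<and> cycle_rule A2 D2 \<longrightarrow> A1 = A2"
  proof (intro allI impI)
    fix A1 D1 A2 D2
    assume a: "is_AD_decomp L A1 D1 \<and> cycle_rule A1 D1 \<and> is_AD_decomp L A2 D2 \<and> cycle_rule A2 D2"
    then obtain \<sigma>1 \<sigma>2 where s1: "\<sigma>1 \<in> S" "A1 = perm_mat_of \<sigma>1" "D1 = Dc"
      and s2: "\<sigma>2 \<in> S" "A2 = perm_mat_of \<sigma>2" "D2 = Dc"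
      using decomp_iff by metis
    have p1: "\<sigma>1 permutes UNIV" "\<forall>j\<in>J. \<sigma>1 j = r j" using s1 S_def by auto
    have p2: "\<sigma>2 permutes UNIV" "\<forall>j\<in>J. \<sigma>2 j = r j" using s2 S_def by auto
    have ru1: "\<And>j. card {i \<in> cycle_dom \<sigma>1 j. i \<notin> J} \<le> 1"
      using a s1 rule_iff[OF p1(1)] by simp
    have ru2: "\<And>j. card {i \<in> cycle_dom \<sigma>2 j. i \<notin> J} \<le> 1"
      using a s2 rule_iff[OF p2(1)] by simp
    have inj1: "inj \<sigma>1" using p1(1) by (rule permutes_inj)
    have inj2: "inj \<sigma>2" using p2(1) by (rule permutes_inj)
    have "\<sigma>1 z = \<sigma>2 z" for z
    proof (cases "z \<in> J")
      case True then show ?thesis using p1 p2 by simp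
    next
      case False
      obtain n where c1: "chain \<sigma>1 J (\<sigma>1 z) z n" using rule_chain[OF p1(1) False ru1] by blast
      obtain m where c2: "chain \<sigma>2 J (\<sigma>2 z) z m" using rule_chain[OF p2(1) False ru2] by blast
      have c2': "chain \<sigma>1 J (\<sigma>2 z) z m"
        by (rule chain_agree[OF _ c2]) (use p1 p2 in simp)
      have n1: "\<sigma>1 z \<notin> \<sigma>1 ` J" using False inj1 by (auto simp: inj_eq)
      have n2: "\<sigma>2 z \<notin> \<sigma>1 ` J"
      proof
        assume "\<sigma>2 z \<in> \<sigma>1 ` J"
        then obtain j where j: "j \<in> J" "\<sigma>2 z = \<sigma>1 j" by auto
        then have "\<sigma>2 z = \<sigma>2 j" using p1 p2 by simp
        then show False using inj2 j False by (auto simp: inj_eq)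
      qed
      show ?thesis using chain_unique[OF inj1 c1 c2' n1 n2] .
    qed
    then have "\<sigma>1 = \<sigma>2" by (rule ext)
    then show "A1 = A2" using s1 s2 by simp
  qed
  have P5: "\<exists>A D. is_AD_decomp L A D \<and> cycle_rule A D"
  proof -
    obtain \<sigma> where s: "\<sigma> permutes UNIV" "\<forall>j\<in>J. \<sigma> j = \<sigma>0 j"
      "\<forall>j. card {i \<in> cycle_dom \<sigma> j. i \<notin> J} \<le> 1"
      using construct[OF s0(1), of J] by blast
    have "\<sigma> \<in> S" using s s0 S_def by simp
    then have "is_AD_decomp L (perm_mat_of \<sigma>) Dc" using decomp_iff by blast
    moreover have "cycle_rule (perm_mat_of \<sigma>) Dc" using rule_iff[OF s(1)] s(3) by simp
    ultimately show ?thesis by blast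
  qed
  show ?thesis using P1 P2 P4 P5 cardA by blast
qed

end
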